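(* Let $(S,d)$ be a metric space and let $P\subset S$ be a subset with at least two points, equipped with the restriction of $d$. Then $\mathcal{E}^S_P$ maps $\operatorname{ext}_*(B^P_{\mathrm{BL}})$ into $\operatorname{ext}_*(B^S_{\mathrm{BL}})$.
   Context: For a metric space $T$, $\mathrm{BL}(T)$ is the space of bounded real-valued Lipschitz functions on $T$, $|f|_L=\sup_{x\neq y}|f(x)-f(y)|/d(x,y)$, $\|f\|_{\mathrm{BL}}=\|f\|_\infty+|f|_L$, $B^T_{\mathrm{BL}}=\{f\in\mathrm{BL}(T):\|f\|_{\mathrm{BL}}\le1\}$, and $\operatorname{ext}_*(B^T_{\mathrm{BL}})=\operatorname{ext}(B^T_{\mathrm{BL}})\setminus\{f\in B^T_{\mathrm{BL}}:|f|=\mathbf{1}\}$ (non-trivial extreme points). For $f\in\mathrm{BL}(P)$: $\mathcal{E}^{S,0}_P f(x)=\sup_{p\in P}[f(p)-|f|_L d(p,x)]$ for $x\in S$, and $\mathcal{E}^S_P f=\max(\mathcal{E}^{S,0}_P f,-\|f\|_\infty)$. *)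

theory Defs
  imports "HOL-Analysis.Analysis"
begin

text \<open>Functions on a subset T of a metric space are represented as total functions
  that vanish outside T (extensional convention), so equality of functions is
  equality on T.\<close>

definition lip_seminorm :: "'a::metric_space set \<Rightarrow> ('a \<Rightarrow> real) \<Rightarrow> real" where
  "lip_seminorm T f = Sup (insert 0 {\<bar>f x - f y\<bar> / dist x y | x y. x \<in> T \<and> y \<in> T \<and> x \<noteq> y})"

definition sup_norm :: "'a set \<Rightarrow> ('a \<Rightarrow> real) \<Rightarrow> real" where
  "sup_norm T f = Sup (insert 0 ((\<lambda>x. \<bar>f x\<bar>) ` T))"

definition BL :: "'a::metric_space set \<Rightarrow> ('a \<Rightarrow> real) set" where
  "BL T = {f. bounded (f ` T) \<and> (\<exists>C. lipschitz_on C T f) \<and> (\<forall>x. x \<notin> T \<longrightarrow> f x = 0)}"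

definition BL_norm :: "'a::metric_space set \<Rightarrow> ('a \<Rightarrow> real) \<Rightarrow> real" where
  "BL_norm T f = sup_norm T f + lip_seminorm T f"

definition BL_ball :: "'a::metric_space set \<Rightarrow> ('a \<Rightarrow> real) set" where
  "BL_ball T = {f \<in> BL T. BL_norm T f \<le> 1}"

definition ext_pts :: "('a \<Rightarrow> real) set \<Rightarrow> ('a \<Rightarrow> real) set" where
  "ext_pts A = {f \<in> A. \<not> (\<exists>g\<in>A. \<exists>h\<in>A. \<exists>t::real. 0 < t \<and> t < 1 \<and> g \<noteq> h \<and>
       f = (\<lambda>x. t * g x + (1 - t) * h x))}"

definition ext_star :: "'a::metric_space set \<Rightarrow> ('a \<Rightarrow> real) set" where
  "ext_star T = ext_pts (BL_ball T) - {f \<in> BL_ball T. \<forall>x\<in>T. \<bar>f x\<bar> = 1}"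

text \<open>The extension operators, with S the whole space (type UNIV).\<close>
definition ext_op0 :: "'a::metric_space set \<Rightarrow> ('a \<Rightarrow> real) \<Rightarrow> 'a \<Rightarrow> real" where
  "ext_op0 P f x = (SUP p\<in>P. f p - lip_seminorm P f * dist p x)"

definition ext_op :: "'a::metric_space set \<Rightarrow> ('a \<Rightarrow> real) \<Rightarrow> 'a \<Rightarrow> real" where
  "ext_op P f x = max (ext_op0 P f x) (- sup_norm P f)"

end

theory Submission
  imports Defs
begin

lemma lip_le:
  fixes f :: "'a::metric_space \<Rightarrow> real"
  assumes "lipschitz_on C T f"
  shows "lip_seminorm T f \<le> C"
  unfolding lip_seminorm_def
proof (rule cSup_least)
  show "insert 0 {\<bar>f x - f y\<bar> / dist x y | x y. x \<in> T \<and> y \<in> T \<and> x \<noteq> y} \<noteq> {}" by simp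
next
  fix z assume "z \<in> insert 0 {\<bar>f x - f y\<bar> / dist x y | x y. x \<in> T \<and> y \<in> T \<and> x \<noteq> y}"
  then consider "z = 0" | x y where "x \<in> T" "y \<in> T" "x \<noteq> y" "z = \<bar>f x - f y\<bar> / dist x y" by blast
  then show "z \<le> C"
  proof cases
    case 1 then show ?thesis using assms by (simp add: lipschitz_on_def)
  next
    case 2
    then have "dist (f x) (f y) \<le> C * dist x y" using assms by (simp add: lipschitz_on_def)
    moreover have "dist x y > 0" using 2 by simp
    ultimately show ?thesis using 2 by (simp add: dist_real_def divide_le_eq)
  qed
qed

lemma lip_bdd:
  fixes f :: "'a::metric_space \<Rightarrow> real"
  assumes "lipschitz_on C T f"
  shows "bdd_above (insert 0 {\<bar>f x - f y\<bar> / dist x y | x y. x \<in> T \<and> y \<in> T \<and> x \<noteq> y})"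
proof (rule bdd_aboveI)
  fix z assume "z \<in> insert 0 {\<bar>f x - f y\<bar> / dist x y | x y. x \<in> T \<and> y \<in> T \<and> x \<noteq> y}"
  then consider "z = 0" | x y where "x \<in> T" "y \<in> T" "x \<noteq> y" "z = \<bar>f x - f y\<bar> / dist x y" by blast
  then show "z \<le> C"
  proof cases
    case 1 then show ?thesis using assms by (simp add: lipschitz_on_def)
  next
    case 2
    then have "dist (f x) (f y) \<le> C * dist x y" using assms by (simp add: lipschitz_on_def)
    moreover have "dist x y > 0" using 2 by simp
    ultimately show ?thesis using 2 by (simp add: dist_real_def divide_le_eq)
  qed
qed

lemma lip_nonneg:
  fixes f :: "'a::metric_space \<Rightarrow> real"
  assumes "lipschitz_on C T f"
  shows "0 \<le> lip_seminorm T f"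
  unfolding lip_seminorm_def by (rule cSup_upper[OF _ lip_bdd[OF assms]]) simp

lemma lip_bound:
  fixes f :: "'a::metric_space \<Rightarrow> real"
  assumes "lipschitz_on C T f" "x \<in> T" "y \<in> T"
  shows "\<bar>f x - f y\<bar> \<le> lip_seminorm T f * dist x y"
proof (cases "x = y")
  case True then show ?thesis by simp
next
  case False
  have "\<bar>f x - f y\<bar> / dist x y \<le> lip_seminorm T f"
    unfolding lip_seminorm_def
    by (rule cSup_upper[OF _ lip_bdd[OF assms(1)]]) (use assms False in blast)
  moreover have "dist x y > 0" using False by simp
  ultimately show ?thesis by (simp add: divide_le_eq)
qed

lemma lip_self:
  fixes f :: "'a::metric_space \<Rightarrow> real"
  assumes "lipschitz_on C T f"
  shows "lipschitz_on (lip_seminorm T f) T f"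
  using lip_bound[OF assms] lip_nonneg[OF assms] by (simp add: lipschitz_on_def dist_real_def)

lemma sup_bdd:
  fixes f :: "'a \<Rightarrow> real"
  assumes "bounded (f ` T)"
  shows "bdd_above (insert 0 ((\<lambda>x. \<bar>f x\<bar>) ` T))"
proof -
  obtain B where "\<forall>x\<in>T. \<bar>f x\<bar> \<le> B" using assms unfolding bounded_iff by auto
  then show ?thesis by (intro bdd_aboveI[where M = "max 0 B"]) auto
qed

lemma sup_bound:
  fixes f :: "'a \<Rightarrow> real"
  assumes "bounded (f ` T)" "x \<in> T"
  shows "\<bar>f x\<bar> \<le> sup_norm T f"
  unfolding sup_norm_def by (rule cSup_upper[OF _ sup_bdd[OF assms(1)]]) (use assms in blast)

lemma sup_nonneg:
  fixes f :: "'a \<Rightarrow> real"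
  assumes "bounded (f ` T)"
  shows "0 \<le> sup_norm T f"
  unfolding sup_norm_def by (rule cSup_upper[OF _ sup_bdd[OF assms(1)]]) simp

lemma sup_le:
  fixes f :: "'a \<Rightarrow> real"
  assumes "\<forall>x\<in>T. \<bar>f x\<bar> \<le> B" "0 \<le> B"
  shows "sup_norm T f \<le> B"
  unfolding sup_norm_def by (rule cSup_least) (use assms in auto)

lemma perturb:
  fixes f :: "'a::metric_space \<Rightarrow> real"
  assumes "\<forall>x. x \<notin> T \<longrightarrow> f x = 0" "lipschitz_on L T f" "\<forall>x\<in>T. \<bar>f x\<bar> \<le> M" "0 \<le> M"
    "\<bar>c\<bar> \<le> e" "M + L + e \<le> 1"
  shows "(\<lambda>x. f x + (if x \<in> T then c else 0)) \<in> BL_ball T"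
proof -
  let ?g = "\<lambda>x. f x + (if x \<in> T then c else 0)"
  have b: "\<forall>x\<in>T. \<bar>?g x\<bar> \<le> M + e" using assms(3,5) by fastforce
  have bd: "bounded (?g ` T)" unfolding bounded_iff using b by (auto simp: real_norm_def)
  have l: "lipschitz_on L T ?g" using assms(2) by (simp add: lipschitz_on_def dist_real_def)
  have "sup_norm T ?g \<le> M + e" by (rule sup_le[OF b]) (use assms in linarith)
  moreover have "lip_seminorm T ?g \<le> L" by (rule lip_le[OF l])
  ultimately show ?thesis using bd l assms(1,6) by (auto simp: BL_ball_def BL_def BL_norm_def)
qed


lemma restrict_ball:
  fixes g :: "'a::metric_space \<Rightarrow> real"
  assumes "g \<in> BL_ball (UNIV::'a set)"
  shows "(\<lambda>x. if x \<in> P then g x else 0) \<in> BL_ball P"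
proof -
  let ?r = "\<lambda>x. if x \<in> P then g x else 0"
  have bd: "bounded (g ` UNIV)" and out: "\<exists>C. lipschitz_on C UNIV g" and nm: "BL_norm UNIV g \<le> 1"
    using assms by (auto simp: BL_ball_def BL_def)
  obtain C where C: "lipschitz_on C UNIV g" using out by blast
  have b: "\<forall>x\<in>P. \<bar>?r x\<bar> \<le> sup_norm UNIV g" using sup_bound[OF bd] by simp
  have bd2: "bounded (?r ` P)" unfolding bounded_iff using b by (auto simp: real_norm_def)
  have l: "lipschitz_on (lip_seminorm UNIV g) P ?r"
    using lip_bound[OF C] lip_nonneg[OF C] by (simp add: lipschitz_on_def dist_real_def)
  have "sup_norm P ?r \<le> sup_norm UNIV g" by (rule sup_le[OF b sup_nonneg[OF bd]])
  moreover have "lip_seminorm P ?r \<le> lip_seminorm UNIV g" by (rule lip_le[OF l])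
  ultimately show ?thesis using bd2 l nm by (auto simp: BL_ball_def BL_def BL_norm_def)
qed

theorem theorem4p8:
  fixes P :: "'a::metric_space set"
  assumes "\<exists>a\<in>P. \<exists>b\<in>P. a \<noteq> b"
    and "f \<in> ext_star P"
  shows "ext_op P f \<in> ext_star (UNIV :: 'a set)"
proof -
  from assms(1) obtain a where aP: "a \<in> P" by blast
  have fext: "f \<in> ext_pts (BL_ball P)" and fnt: "\<not> (\<forall>x\<in>P. \<bar>f x\<bar> = 1)"
    using assms(2) by (auto simp: ext_star_def ext_pts_def)
  have fball: "f \<in> BL_ball P" using fext by (simp add: ext_pts_def)
  then have fbd: "bounded (f ` P)" and fC: "\<exists>C. lipschitz_on C P f"
    and fout: "\<forall>x. x \<notin> P \<longrightarrow> f x = 0" and fnorm: "BL_norm P f \<le> 1"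
    by (auto simp: BL_ball_def BL_def)
  obtain C where C: "lipschitz_on C P f" using fC by blast
  define M where "M = sup_norm P f"
  define L where "L = lip_seminorm P f"
  have M0: "0 \<le> M" unfolding M_def by (rule sup_nonneg[OF fbd])
  have L0: "0 \<le> L" unfolding L_def by (rule lip_nonneg[OF C])
  have fM: "\<forall>x\<in>P. \<bar>f x\<bar> \<le> M" unfolding M_def using sup_bound[OF fbd] by blast
  have fL: "\<forall>x\<in>P. \<forall>y\<in>P. \<bar>f x - f y\<bar> \<le> L * dist x y" unfolding L_def using lip_bound[OF C] by blast
  have fLip: "lipschitz_on L P f" unfolding L_def by (rule lip_self[OF C])
  have ML1: "M + L \<le> 1" using fnorm by (simp add: BL_norm_def M_def L_def)
  have norm1: "M + L = 1"
  proof (rule ccontr)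
    assume "M + L \<noteq> 1"
    define e where "e = 1 - (M + L)"
    have e0: "e > 0" using ML1 \<open>M + L \<noteq> 1\<close> unfolding e_def by linarith
    let ?g = "\<lambda>x. f x + (if x \<in> P then e else 0)"
    let ?h = "\<lambda>x. f x + (if x \<in> P then - e else 0)"
    have g: "?g \<in> BL_ball P" by (rule perturb[OF fout fLip fM M0]) (use e0 e_def in auto)
    have h: "?h \<in> BL_ball P" by (rule perturb[OF fout fLip fM M0]) (use e0 e_def in auto)
    have ne: "?g \<noteq> ?h"
    proof
      assume "?g = ?h"
      then have "?g a = ?h a" by metis
      then show False using aP e0 by simp
    qed
    have eq: "f = (\<lambda>x. (1/2) * ?g x + (1 - 1/2) * ?h x)" by (rule ext) (simp add: algebra_simps)
    have "\<exists>g\<in>BL_ball P. \<exists>h\<in>BL_ball P. \<exists>t::real. 0 < t \<and> t < 1 \<and> g \<noteq> h \<and>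
       f = (\<lambda>x. t * g x + (1 - t) * h x)"
      using g h ne eq by (intro bexI[OF _ g] bexI[OF _ h] exI[where x="1/2"]) auto
    then show False using fext unfolding ext_pts_def by blast
  qed
  define F where "F = ext_op P f"
  have E0: "ext_op0 P f x = (SUP p\<in>P. f p - L * dist p x)" for x
    by (simp add: ext_op0_def L_def)
  have bdd: "bdd_above ((\<lambda>p. f p - L * dist p x) ` P)" for x
  proof (rule bdd_aboveI2)
    fix p assume "p \<in> P"
    then show "f p - L * dist p x \<le> M" using fM L0 by (smt (verit) zero_le_dist mult_nonneg_nonneg)
  qed
  have E0low: "f p - L * dist p x \<le> ext_op0 P f x" if "p \<in> P" for p x
    unfolding E0 by (rule cSUP_upper[OF that bdd])
  have E0up: "ext_op0 P f x \<le> M" for x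
    unfolding E0 using aP
  proof (intro cSUP_least)
    fix p assume "p \<in> P"
    then show "f p - L * dist p x \<le> M" using fM L0 by (smt (verit) zero_le_dist mult_nonneg_nonneg)
  qed auto
  have Fdef: "F x = max (ext_op0 P f x) (- M)" for x by (simp add: F_def ext_op_def M_def)
  have FM: "\<bar>F x\<bar> \<le> M" for x using E0up[of x] M0 by (simp add: Fdef)
  have FP: "F x = f x" if "x \<in> P" for x
  proof -
    have "ext_op0 P f x \<le> f x" unfolding E0 using aP
    proof (intro cSUP_least)
      fix p assume "p \<in> P"
      then have "\<bar>f p - f x\<bar> \<le> L * dist p x" using fL that by blast
      then show "f p - L * dist p x \<le> f x" by (auto simp: abs_le_iff)
    qed auto
    moreover have "f x \<le> ext_op0 P f x" using E0low[OF that, of x] by simp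
    moreover have "- M \<le> f x" using fM that by (auto simp: abs_le_iff)
    ultimately show ?thesis by (simp add: Fdef)
  qed
  have E0lip: "ext_op0 P f x \<le> ext_op0 P f y + L * dist x y" for x y
  proof -
    show ?thesis
      unfolding E0[of x]
    proof (intro cSUP_least)
      show "P \<noteq> {}" using aP by blast
      fix p assume p: "p \<in> P"
      have "dist p y \<le> dist p x + dist x y" by (rule dist_triangle)
      then have "L * dist p y \<le> L * dist p x + L * dist x y" using L0
        by (metis distrib_left mult_left_mono)
      then have "f p - L * dist p x \<le> f p - L * dist p y + L * dist x y" by linarith
      also have "\<dots> \<le> ext_op0 P f y + L * dist x y" using E0low[OF p, of y] by linarith
      finally show "f p - L * dist p x \<le> ext_op0 P f y + L * dist x y" .
    qed

  qed
  have FLip: "lipschitz_on L UNIV F"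
    unfolding lipschitz_on_def
  proof (intro conjI L0 ballI)
    fix x y :: 'a
    have "ext_op0 P f x \<le> ext_op0 P f y + L * dist x y" by (rule E0lip)
    moreover have "ext_op0 P f y \<le> ext_op0 P f x + L * dist x y"
      using E0lip[of y x] by (simp add: dist_commute)
    ultimately show "dist (F x) (F y) \<le> L * dist x y"
      using L0 zero_le_dist[of x y] mult_nonneg_nonneg[of L "dist x y"] by (simp add: Fdef dist_real_def max_def abs_le_iff)
  qed
  have Fbd: "bounded (F ` UNIV)" unfolding bounded_iff using FM by (auto simp: real_norm_def)
  have Fball: "F \<in> BL_ball UNIV"
  proof -
    have "sup_norm UNIV F \<le> M" by (rule sup_le) (use FM M0 in auto)
    moreover have "lip_seminorm UNIV F \<le> L" by (rule lip_le[OF FLip])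
    ultimately show ?thesis using Fbd FLip ML1 by (auto simp: BL_ball_def BL_def BL_norm_def)
  qed
  have key: "F x \<le> g x" if g: "g \<in> BL_ball UNIV" and gP: "\<forall>x\<in>P. g x = f x" for g x
  proof -
    have gbd: "bounded (g ` UNIV)" and gn: "BL_norm UNIV g \<le> 1" and "\<exists>C. lipschitz_on C UNIV g"
      using g by (auto simp: BL_ball_def BL_def)
    then obtain D where D: "lipschitz_on D UNIV g" by blast
    have "M \<le> sup_norm UNIV g" unfolding M_def
    proof (rule sup_le[OF _ sup_nonneg[OF gbd]], intro ballI)
      fix y assume "y \<in> P"
      then show "\<bar>f y\<bar> \<le> sup_norm UNIV g" using gP sup_bound[OF gbd, of y] by simp
    qed
    moreover have "L \<le> lip_seminorm UNIV g" unfolding L_def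
    proof (rule lip_le, unfold lipschitz_on_def, intro conjI lip_nonneg[OF D] ballI)
      fix y z assume "y \<in> P" "z \<in> P"
      then show "dist (f y) (f z) \<le> lip_seminorm UNIV g * dist y z"
        using gP lip_bound[OF D, of y z] by (simp add: dist_real_def)
    qed
    ultimately have sU: "sup_norm UNIV g \<le> M" and lU: "lip_seminorm UNIV g \<le> L"
      using gn norm1 by (auto simp: BL_norm_def)
    have "- M \<le> g x" using sup_bound[OF gbd, of x] sU by (auto simp: abs_le_iff)
    moreover have "ext_op0 P f x \<le> g x" unfolding E0 using aP
    proof (intro cSUP_least)
      fix p assume p: "p \<in> P"
      have "\<bar>g p - g x\<bar> \<le> lip_seminorm UNIV g * dist p x" by (rule lip_bound[OF D]) auto
      also have "\<dots> \<le> L * dist p x" by (rule mult_right_mono[OF lU]) simp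
      finally show "f p - L * dist p x \<le> g x" using gP p by (auto simp: abs_le_iff)
    qed auto
    ultimately show ?thesis by (simp add: Fdef)
  qed
  have Fext: "F \<in> ext_pts (BL_ball UNIV)"
  proof -
    have "\<not> (\<exists>g\<in>BL_ball UNIV. \<exists>h\<in>BL_ball UNIV. \<exists>t::real. 0 < t \<and> t < 1 \<and> g \<noteq> h \<and>
       F = (\<lambda>x. t * g x + (1 - t) * h x))"
    proof
      assume "\<exists>g\<in>BL_ball UNIV. \<exists>h\<in>BL_ball UNIV. \<exists>t::real. 0 < t \<and> t < 1 \<and> g \<noteq> h \<and>
       F = (\<lambda>x. t * g x + (1 - t) * h x)"
      then obtain g h t where g: "g \<in> BL_ball UNIV" and h: "h \<in> BL_ball UNIV" and t: "0 < t" "t < 1"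
        and gh: "g \<noteq> h" and Feq: "F = (\<lambda>x. t * g x + (1 - t) * h x)" by blast
      define gr where "gr = (\<lambda>x. if x \<in> P then g x else 0)"
      define hr where "hr = (\<lambda>x. if x \<in> P then h x else 0)"
      have gr: "gr \<in> BL_ball P" unfolding gr_def by (rule restrict_ball[OF g])
      have hr: "hr \<in> BL_ball P" unfolding hr_def by (rule restrict_ball[OF h])
      have feq: "f = (\<lambda>x. t * gr x + (1 - t) * hr x)"
      proof
        fix x show "f x = t * gr x + (1 - t) * hr x"
        proof (cases "x \<in> P")
          case True
          then show ?thesis using FP[OF True] Feq by (simp add: gr_def hr_def)
        next
          case False then show ?thesis using fout by (simp add: gr_def hr_def)
        qed
      qed
      have "gr = hr"
      proof (rule ccontr)
        assume "gr \<noteq> hr"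
        then have "\<exists>g\<in>BL_ball P. \<exists>h\<in>BL_ball P. \<exists>t::real. 0 < t \<and> t < 1 \<and> g \<noteq> h \<and>
          f = (\<lambda>x. t * g x + (1 - t) * h x)" using gr hr t feq by blast
        then show False using fext unfolding ext_pts_def by blast
      qed
      then have "f = gr" using feq by (auto simp: algebra_simps)
      then have gP: "\<forall>x\<in>P. g x = f x" and hP: "\<forall>x\<in>P. h x = f x"
        using \<open>gr = hr\<close> by (auto simp: gr_def hr_def fun_eq_iff split: if_splits)
      have "g = h"
      proof
        fix x
        have a1: "F x \<le> g x" by (rule key[OF g gP])
        have a2: "F x \<le> h x" by (rule key[OF h hP])
        have a3: "F x = t * g x + (1 - t) * h x" using Feq by metis
        have "t * (g x - F x) \<ge> 0" using a1 t by simp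
        moreover have "(1 - t) * (h x - F x) \<ge> 0" using a2 t by simp
        moreover have "t * (g x - F x) + (1 - t) * (h x - F x) = 0" using a3 by (simp add: algebra_simps)
        ultimately have "t * (g x - F x) = 0" "(1 - t) * (h x - F x) = 0" by linarith+
        then show "g x = h x" using t by simp
      qed
      then show False using gh by blast
    qed
    then show ?thesis using Fball by (simp add: ext_pts_def)
  qed
  have "\<not> (\<forall>x\<in>UNIV. \<bar>F x\<bar> = 1)" using fnt FP by (metis UNIV_I)
  then show ?thesis using Fext unfolding F_def[symmetric] by (simp add: ext_star_def)
qed

end
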